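(* Let $u\ge1$, $d\ge0$, $d'\ge0$ be integers. Let $T=\{T_1,\dots,T_l\}\in L(d+u,d)$ and $T'=\{T'_1,\dots,T'_l\}\in L(d'+u,d')$ satisfy $\operatorname{codim}_d(T_i)=\operatorname{codim}_{d'}(T'_i)$ for each $i$. Define $\bar\mu_{u,d}(T)=\mu_{d+u,d}(T)$. Then $\bar\mu_{u,d}(T)=\bar\mu_{u,d'}(T')$.
   Context: For a finite set $X$ let $\operatorname{codim}_d(X)=d+1-|X|$. For a finite collection $\{T_1,\dots,T_l\}$ of pairwise distinct finite sets put $\rho_d(\{T_1,\dots,T_l\})=\sum_{i=1}^l\operatorname{codim}_d(T_i)$ (with $\rho_d(\emptyset)=0$) and $D_d(\{T_1,\dots,T_l\})=\operatorname{codim}_d(T_1\cap\cdots\cap T_l)-\rho_d(\{T_1,\dots,T_l\})$. For integers $d\ge0$, $n>d$, $L(n,d)$ is the set of all collections $T$ of subsets of $\{1,\dots,n\}$ such that (i) $D_d(T')>0$ for every $T'\subset T$ with $|T'|>1$, and (ii) $0\le|T_i|\le d$ for every $T_i\in T$. It is partially ordered by: $T<T'$ iff $\rho_d(T)<\rho_d(T')$ and for every $T_i\in T$ there exists $T'_j\in T'$ with $T'_j\subset T_i$; $T\le T'$ means $T<T'$ or $T=T'$. The Möbius function $\mu_{n,d}$ of $L(n,d)$ is defined by $\mu_{n,d}(T,T)=1$ and $\sum_{S:\,T\le S\le T'}\mu_{n,d}(T,S)=0$ for $T<T'$; and $\mu_{n,d}(T):=\mu_{n,d}(\emptyset,T)$.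 *)

theory Defs
  imports Main
begin

definition codim :: "nat \<Rightarrow> nat set \<Rightarrow> int" where
  "codim d X = int d + 1 - int (card X)"

definition rho :: "nat \<Rightarrow> nat set set \<Rightarrow> int" where
  "rho d T = (\<Sum>X\<in>T. codim d X)"

definition Dd :: "nat \<Rightarrow> nat set set \<Rightarrow> int" where
  "Dd d T = codim d (\<Inter>T) - rho d T"

definition L :: "nat \<Rightarrow> nat \<Rightarrow> nat set set set" where
  "L n d = {T. T \<subseteq> Pow {1..n}
              \<and> (\<forall>T'\<subseteq>T. card T' > 1 \<longrightarrow> Dd d T' > 0)
              \<and> (\<forall>X\<in>T. card X \<le> d)}"

definition lessL :: "nat \<Rightarrow> nat set set \<Rightarrow> nat set set \<Rightarrow> bool" where
  "lessL d T T' \<longleftrightarrow> rho d T < rho d T' \<and> (\<forall>X\<in>T. \<exists>Y\<in>T'. Y \<subseteq> X)"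

definition leL :: "nat \<Rightarrow> nat set set \<Rightarrow> nat set set \<Rightarrow> bool" where
  "leL d T T' \<longleftrightarrow> lessL d T T' \<or> T = T'"

lemma rho_nonneg:
  assumes "\<forall>X\<in>T. card X \<le> d"
  shows "rho d T \<ge> 0"
  unfolding rho_def codim_def
  using assms by (intro sum_nonneg) auto

function mob :: "nat \<Rightarrow> nat \<Rightarrow> nat set set \<Rightarrow> nat set set \<Rightarrow> int" where
  "mob n d T T' =
    (if T = T' then 1
     else if T \<in> L n d \<and> T' \<in> L n d \<and> lessL d T T'
     then - (\<Sum>S\<in>{S \<in> L n d. leL d T S \<and> lessL d S T'}. mob n d T S)
     else 0)"
  by pat_completeness auto
termination
proof (relation "measure (\<lambda>(n, d, T, T'). nat (rho d T'))", goal_cases)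
  case 1 then show ?case by simp
next
  case (2 n d T T' S)
  then have "rho d S \<ge> 0" using rho_nonneg[of S d] by (auto simp: L_def)
  with 2 show ?case by (auto simp: lessL_def)
qed

definition mu :: "nat \<Rightarrow> nat \<Rightarrow> nat set set \<Rightarrow> int" where
  "mu n d T = mob n d {} T"

definition mubar :: "nat \<Rightarrow> nat \<Rightarrow> nat set set \<Rightarrow> int" where
  "mubar u d T = mu (d + u) d T"

end

theory Submission
  imports Defs
begin


definition cp :: "nat \<Rightarrow> nat set \<Rightarrow> nat set" where "cp n X = {1..n} - X"

definition ex :: "nat \<Rightarrow> nat set set \<Rightarrow> int" where
  "ex n R = int (\<Sum>X\<in>R. card (cp n X)) - int (card (\<Union>X\<in>R. cp n X))"

lemma finite_cp[simp]: "finite (cp n X)" by (simp add: cp_def)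

lemma card_cp: "X \<subseteq> {1..n} \<Longrightarrow> int (card X) = int n - int (card (cp n X))"
proof -
  assume a: "X \<subseteq> {1..n}"
  have "finite X" using a finite_subset by blast
  then have "card (cp n X) = n - card X" unfolding cp_def using a by (simp add: card_Diff_subset)
  moreover have "card X \<le> n" using a by (metis card_atLeastAtMost card_mono finite_atLeastAtMost diff_Suc_1)
  ultimately show ?thesis by simp
qed

lemma codim_cp: "X \<subseteq> {1..n} \<Longrightarrow> n = d + u \<Longrightarrow> codim d X = int (card (cp n X)) - (int u - 1)"
  using card_cp[of X n] unfolding codim_def by simp

lemma Inter_cp: "R \<noteq> {} \<Longrightarrow> cp n (\<Inter>R) = (\<Union>X\<in>R. cp n X)"
  unfolding cp_def by auto

lemma Inter_sub: "R \<noteq> {} \<Longrightarrow> \<forall>X\<in>R. X \<subseteq> {1..n} \<Longrightarrow> \<Inter>R \<subseteq> {1..n}"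
  by auto

lemma Dd_ex:
  assumes "finite R" "R \<noteq> {}" "\<forall>X\<in>R. X \<subseteq> {1..n}" "n = d + u"
  shows "Dd d R = (int (card R) - 1) * (int u - 1) - ex n R"
proof -
  have "codim d (\<Inter>R) = int (card (\<Union>X\<in>R. cp n X)) - (int u - 1)"
    using codim_cp[OF Inter_sub[OF assms(2,3)] assms(4)] Inter_cp[OF assms(2)] by simp
  moreover have "rho d R = (\<Sum>X\<in>R. int (card (cp n X)) - (int u - 1))"
    unfolding rho_def using codim_cp assms(3,4) by (intro sum.cong) auto
  moreover have "(\<Sum>X\<in>R. int (card (cp n X)) - (int u - 1)) = int (\<Sum>X\<in>R. card (cp n X)) - int (card R) * (int u - 1)"
    by (simp add: sum_subtractf)
  ultimately show ?thesis unfolding Dd_def ex_def by (simp add: algebra_simps)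
qed

lemma exc_mono:
  assumes "finite K" "\<forall>i\<in>K. U i \<subseteq> V i \<and> finite (V i)"
  shows "int (\<Sum>i\<in>K. card (U i)) - int (card (\<Union>i\<in>K. U i)) \<le> int (\<Sum>i\<in>K. card (V i)) - int (card (\<Union>i\<in>K. V i))"
  using assms
proof (induction K rule: finite_induct)
  case empty then show ?case by simp
next
  case (insert j K)
  have fU: "finite (U i)" if "i \<in> insert j K" for i using insert.prems that finite_subset by blast
  have fV: "finite (V i)" if "i \<in> insert j K" for i using insert.prems that by blast
  have fUK: "finite (\<Union>i\<in>K. U i)" using fU insert.hyps by auto
  have fVK: "finite (\<Union>i\<in>K. V i)" using fV insert.hyps by auto
  have e1: "int (card (\<Union>i\<in>insert j K. U i)) = int (card (U j)) + int (card (\<Union>i\<in>K. U i)) - int (card (U j \<inter> (\<Union>i\<in>K. U i)))"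
    using card_Un_Int[OF fU[of j] fUK] by simp
  have e2: "int (card (\<Union>i\<in>insert j K. V i)) = int (card (V j)) + int (card (\<Union>i\<in>K. V i)) - int (card (V j \<inter> (\<Union>i\<in>K. V i)))"
    using card_Un_Int[OF fV[of j] fVK] by simp
  have m: "card (U j \<inter> (\<Union>i\<in>K. U i)) \<le> card (V j \<inter> (\<Union>i\<in>K. V i))"
    apply (rule card_mono) using fV insert.prems by auto
  have ih: "int (\<Sum>i\<in>K. card (U i)) - int (card (\<Union>i\<in>K. U i)) \<le> int (\<Sum>i\<in>K. card (V i)) - int (card (\<Union>i\<in>K. V i))"
    using insert by auto
  show ?case using ih m e1 e2 insert.hyps by simp
qed




lemma L_D: "T \<in> L n d \<Longrightarrow> T' \<subseteq> T \<Longrightarrow> card T' > 1 \<Longrightarrow> Dd d T' > 0"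
  unfolding L_def by blast
lemma L_sub: "T \<in> L n d \<Longrightarrow> X \<in> T \<Longrightarrow> X \<subseteq> {1..n}"
  unfolding L_def by blast
lemma L_card: "T \<in> L n d \<Longrightarrow> X \<in> T \<Longrightarrow> card X \<le> d"
  unfolding L_def by blast
lemma L_finite: "T \<in> L n d \<Longrightarrow> finite T"
proof -
  assume "T \<in> L n d"
  then have "T \<subseteq> Pow {1..n}" unfolding L_def by blast
  then show ?thesis using finite_subset by blast
qed

lemma uniq:
  assumes TL: "set Ts \<in> L n d" and dist: "distinct Ts" and i: "i < length Ts" and j: "j < length Ts"
    and si: "Ts!i \<subseteq> Z" and sj: "Ts!j \<subseteq> Z" and fZ: "finite Z" and cZ: "card Z \<le> d"
  shows "i = j"
proof (rule ccontr)
  assume "i \<noteq> j"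
  then have ne: "Ts!i \<noteq> Ts!j" using dist i j nth_eq_iff_index_eq by blast
  let ?A = "Ts!i" and ?B = "Ts!j"
  have fA: "finite ?A" and fB: "finite ?B" using si sj fZ finite_subset by auto
  have "Dd d {?A, ?B} > 0" using L_D[OF TL, of "{?A,?B}"] ne i j by auto
  then have "int d + 1 - int (card (?A \<inter> ?B)) - (int d + 1 - int (card ?A) + (int d + 1 - int (card ?B))) > 0"
    unfolding Dd_def rho_def codim_def using ne by simp
  moreover have "card (?A \<union> ?B) + card (?A \<inter> ?B) = card ?A + card ?B" using card_Un_Int[OF fA fB] by simp
  moreover have "card (?A \<union> ?B) \<le> card Z" using si sj fZ by (intro card_mono) auto
  ultimately show False using cZ by linarith
qed

definition ix :: "nat set list \<Rightarrow> nat set \<Rightarrow> nat" where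
  "ix Ts X = (THE i. i < length Ts \<and> Ts!i \<subseteq> X)"

lemma ix_eq:
  assumes TL: "set Ts \<in> L n d" and dist: "distinct Ts" and i: "i < length Ts"
    and si: "Ts!i \<subseteq> X" and fX: "finite X" and cX: "card X \<le> d"
  shows "ix Ts X = i"
  unfolding ix_def
  apply (rule the_equality)
  using assms uniq[OF TL dist] by blast+

lemma mixed:
  assumes nd: "n = d + u" and dist: "distinct Ts" and TL: "set Ts \<in> L n d"
    and fR: "finite R" and cR: "card R \<ge> 2"
    and RX: "\<forall>X\<in>R. X \<subseteq> {1..n} \<and> ixf X < length Ts \<and> Ts!(ixf X) \<subseteq> X"
    and parts: "\<forall>i. card {X\<in>R. ixf X = i} \<ge> 2 \<longrightarrow> Dd d {X\<in>R. ixf X = i} > 0"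
  shows "Dd d R > 0"
proof -
  define K where "K = ixf ` R"
  define Ri where "Ri i = {X\<in>R. ixf X = i}" for i
  define U where "U i = (\<Union>X\<in>Ri i. cp n X)" for i
  define B where "B i = cp n (Ts!i)" for i
  define w where "w = int u - 1"
  have fK: "finite K" using fR K_def by simp
  have Rne: "R \<noteq> {}" using cR by auto
  have Kne: "K \<noteq> {}" using Rne K_def by simp
  have Klt: "K \<subseteq> {..<length Ts}" using RX K_def by auto
  have fRi: "finite (Ri i)" for i using fR Ri_def by simp
  have Rine: "i \<in> K \<Longrightarrow> Ri i \<noteq> {}" for i using K_def Ri_def by auto
  show ?thesis
  proof (cases "card K = 1")
    case True
    then obtain i where "K = {i}" using card_1_singletonE by blast
    then have "R = Ri i" using K_def Ri_def by auto
    then show ?thesis using parts cR unfolding Ri_def by metis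
  next
    case False
    then have cK: "card K \<ge> 2" using Kne fK by (metis One_nat_def Suc_1 Suc_leI card_gt_0_iff le_neq_implies_less less_Suc_eq_le not_less_eq_eq)
    have s1: "(\<Sum>X\<in>R. card (cp n X)) = (\<Sum>i\<in>K. \<Sum>X\<in>Ri i. card (cp n X))"
      unfolding Ri_def using sum.group[OF fR fK, of ixf "\<lambda>X. card (cp n X)"] K_def by simp
    have s2: "card R = (\<Sum>i\<in>K. card (Ri i))"
      unfolding Ri_def using sum.group[OF fR fK, of ixf "\<lambda>X. (1::nat)"] K_def by simp
    have u1: "(\<Union>X\<in>R. cp n X) = (\<Union>i\<in>K. U i)" unfolding U_def Ri_def K_def by auto
    have exR: "ex n R = (\<Sum>i\<in>K. ex n (Ri i)) + (int (\<Sum>i\<in>K. card (U i)) - int (card (\<Union>i\<in>K. U i)))"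
      unfolding ex_def s1 u1 U_def by (simp add: sum_subtractf)
    have cross1: "int (\<Sum>i\<in>K. card (U i)) - int (card (\<Union>i\<in>K. U i)) \<le> int (\<Sum>i\<in>K. card (B i)) - int (card (\<Union>i\<in>K. B i))"
      apply (rule exc_mono[OF fK])
      unfolding U_def B_def Ri_def cp_def using RX by auto
    have injK: "inj_on (nth Ts) K" using dist Klt by (simp add: inj_on_def nth_eq_iff_index_eq subset_eq)
    have TK: "nth Ts ` K \<subseteq> set Ts" using Klt by auto
    have cTK: "card (nth Ts ` K) = card K" using card_image[OF injK] .
    have "Dd d (nth Ts ` K) > 0" using L_D[OF TL TK] cTK cK by simp
    moreover have "Dd d (nth Ts ` K) = (int (card K) - 1) * w - ex n (nth Ts ` K)"
      using Dd_ex[of "nth Ts ` K" n d u] fK Kne TK L_sub[OF TL] nd cTK w_def by auto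
    moreover have "ex n (nth Ts ` K) = int (\<Sum>i\<in>K. card (B i)) - int (card (\<Union>i\<in>K. B i))"
      unfolding ex_def B_def by (simp add: sum.reindex[OF injK])
    ultimately have cross2: "int (\<Sum>i\<in>K. card (B i)) - int (card (\<Union>i\<in>K. B i)) < (int (card K) - 1) * w"
      by simp
    have within: "ex n (Ri i) \<le> (int (card (Ri i)) - 1) * w" if iK: "i \<in> K" for i
    proof (cases "card (Ri i) \<ge> 2")
      case True
      then have "Dd d (Ri i) > 0" using parts Ri_def by simp
      moreover have "Dd d (Ri i) = (int (card (Ri i)) - 1) * w - ex n (Ri i)"
        using Dd_ex[of "Ri i" n d u] fRi Rine[OF iK] RX Ri_def nd w_def by auto
      ultimately show ?thesis by simp
    next
      case False
      then have "card (Ri i) = 1" using Rine[OF iK] fRi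
        by (metis One_nat_def Suc_1 card_gt_0_iff le_simps(3) linorder_neqE_nat not_less_eq_eq)
      then obtain X where "Ri i = {X}" using card_1_singletonE by blast
      then show ?thesis unfolding ex_def by simp
    qed
    have "(\<Sum>i\<in>K. ex n (Ri i)) \<le> (\<Sum>i\<in>K. (int (card (Ri i)) - 1) * w)"
      using within by (intro sum_mono) auto
    also have "\<dots> = (int (card R) - int (card K)) * w"
      unfolding s2 by (simp add: sum_subtractf algebra_simps sum_distrib_left sum_distrib_right)
    finally have "ex n R < (int (card R) - 1) * w"
      using exR cross1 cross2 by (simp add: algebra_simps)
    moreover have "Dd d R = (int (card R) - 1) * w - ex n R"
      using Dd_ex[of R n d u] fR Rne RX nd w_def by auto
    ultimately show ?thesis by simp
  qed
qed




definition fm :: "nat \<Rightarrow> nat \<Rightarrow> nat set list \<Rightarrow> (nat \<Rightarrow> nat \<Rightarrow> nat) \<Rightarrow> nat set \<Rightarrow> nat set" where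
  "fm n n' Ts h X = {1..n'} - h (ix Ts X) ` cp n X"

definition EE :: "nat \<Rightarrow> nat \<Rightarrow> nat set list \<Rightarrow> nat set set" where
  "EE n d Ts = {X. X \<subseteq> {1..n} \<and> card X \<le> d \<and> (\<exists>i<length Ts. Ts!i \<subseteq> X)}"

definition Down :: "nat \<Rightarrow> nat \<Rightarrow> nat set list \<Rightarrow> nat set set set" where
  "Down n d Ts = {S \<in> L n d. S = set Ts \<or> lessL d S (set Ts)}"

lemma E_props:
  assumes "set Ts \<in> L n d" "distinct Ts" "X \<in> EE n d Ts"
  shows "finite X" "X \<subseteq> {1..n}" "card X \<le> d" "ix Ts X < length Ts" "Ts!(ix Ts X) \<subseteq> X"
proof -
  show fX: "finite X" using assms(3) unfolding EE_def using finite_subset by blast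
  show "X \<subseteq> {1..n}" "card X \<le> d" using assms(3) unfolding EE_def by auto
  obtain i where i: "i < length Ts" "Ts!i \<subseteq> X" using assms(3) unfolding EE_def by auto
  have "ix Ts X = i" using ix_eq[OF assms(1,2) i fX] assms(3) unfolding EE_def by auto
  then show "ix Ts X < length Ts" "Ts!(ix Ts X) \<subseteq> X" using i by auto
qed

lemma cp_cp: "A \<subseteq> {1..n} \<Longrightarrow> cp n ({1..n} - A) = A" unfolding cp_def by auto
lemma cp_sub_iff: "X \<subseteq> {1..n} \<Longrightarrow> Y \<subseteq> {1..n} \<Longrightarrow> cp n X \<subseteq> cp n Y \<longleftrightarrow> Y \<subseteq> X"
  unfolding cp_def by auto

lemma inj_img_sub: assumes "inj_on f C" "A \<subseteq> C" "B \<subseteq> C" shows "f ` A \<subseteq> f ` B \<longleftrightarrow> A \<subseteq> B"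
proof
  assume a: "f ` A \<subseteq> f ` B"
  show "A \<subseteq> B"
  proof
    fix x assume "x \<in> A"
    then have "f x \<in> f ` B" "x \<in> C" using a assms by auto
    then show "x \<in> B" using inj_on_image_mem_iff[OF assms(1) _ assms(3)] by blast
  qed
qed auto

locale pair =
  fixes n d n' d' u :: nat and Ts Ts' :: "nat set list" and h :: "nat \<Rightarrow> nat \<Rightarrow> nat"
  assumes nd: "n = d + u" and nd': "n' = d' + u" and u1: "u \<ge> 1"
    and dist: "distinct Ts" and dist': "distinct Ts'"
    and len: "length Ts' = length Ts" and TL: "set Ts \<in> L n d" and TL': "set Ts' \<in> L n' d'"
    and hb: "\<forall>i<length Ts. bij_betw (h i) (cp n (Ts!i)) (cp n' (Ts'!i))"
begin

abbreviation f where "f \<equiv> fm n n' Ts h"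
abbreviation E where "E \<equiv> EE n d Ts"
abbreviation E' where "E' \<equiv> EE n' d' Ts'"

lemma f_props:
  assumes X: "X \<in> E"
  shows "cp n' (f X) = h (ix Ts X) ` cp n X" "f X \<in> E'" "ix Ts' (f X) = ix Ts X"
    "codim d' (f X) = codim d X"
proof -
  define i where "i = ix Ts X"
  note ep = E_props[OF TL dist X]
  have il: "i < length Ts" and si: "Ts!i \<subseteq> X" using ep i_def by auto
  have bij: "bij_betw (h i) (cp n (Ts!i)) (cp n' (Ts'!i))" using hb il by auto
  have C: "cp n X \<subseteq> cp n (Ts!i)" using si unfolding cp_def by auto
  have hC: "h i ` cp n X \<subseteq> cp n' (Ts'!i)" using C bij bij_betw_imp_surj_on by blast
  have hC2: "h i ` cp n X \<subseteq> {1..n'}" using hC unfolding cp_def by auto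
  show cpf: "cp n' (f X) = h (ix Ts X) ` cp n X" unfolding fm_def i_def[symmetric] using cp_cp[OF hC2] .
  have cardh: "card (h i ` cp n X) = card (cp n X)"
    using card_image bij_betw_imp_inj_on[OF bij] C inj_on_subset by blast
  have fsub: "f X \<subseteq> {1..n'}" unfolding fm_def by auto
  have cX: "int (card X) = int n - int (card (cp n X))" using card_cp ep(2) .
  have cfX: "int (card (f X)) = int n' - int (card (cp n X))"
    using card_cp[OF fsub] cpf cardh i_def by simp
  have cardf: "card (f X) \<le> d'" using cfX cX ep(3) nd nd' by linarith
  have Ts'sub: "Ts'!i \<subseteq> {1..n'}" using L_sub[OF TL'] il len by simp
  have si': "Ts'!i \<subseteq> f X" unfolding fm_def i_def[symmetric] using hC Ts'sub unfolding cp_def by auto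
  show fE: "f X \<in> E'" unfolding EE_def using fsub cardf si' il len by auto
  show "ix Ts' (f X) = ix Ts X"
    using ix_eq[OF TL' dist', of i "f X"] il len si' cardf fsub finite_subset i_def by auto
  show "codim d' (f X) = codim d X"
    using codim_cp[OF fsub nd'] codim_cp[OF ep(2) nd] cpf cardh i_def by simp
qed

lemma f_sub:
  assumes X: "X \<in> E" and Y: "Y \<in> E"
  shows "f Y \<subseteq> f X \<longleftrightarrow> Y \<subseteq> X"
proof -
  note ex = E_props[OF TL dist X] and ey = E_props[OF TL dist Y]
  note fx = f_props[OF X] and fy = f_props[OF Y]
  note efx = E_props[OF TL' dist' fx(2)] and efy = E_props[OF TL' dist' fy(2)]
  have eq_imp: "cp n X \<subseteq> cp n Y \<longleftrightarrow> h (ix Ts X) ` cp n X \<subseteq> h (ix Ts X) ` cp n Y"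
    if "ix Ts X = ix Ts Y"
  proof -
    have bij: "bij_betw (h (ix Ts X)) (cp n (Ts!ix Ts X)) (cp n' (Ts'!ix Ts X))" using hb ex by auto
    have "cp n X \<subseteq> cp n (Ts!ix Ts X)" "cp n Y \<subseteq> cp n (Ts!ix Ts X)"
      using ex(5) ey(5) that unfolding cp_def by auto
    then show ?thesis using inj_img_sub[OF bij_betw_imp_inj_on[OF bij]] by blast
  qed
  show ?thesis
  proof
    assume a: "f Y \<subseteq> f X"
    have "ix Ts Y = ix Ts X"
      using uniq[OF TL' dist' efy(4) efx(4), of "f X"] efy(5) a efx fx(3) fy(3) by auto
    then have "h (ix Ts X) ` cp n X \<subseteq> h (ix Ts X) ` cp n Y"
      using a fx(1) fy(1) cp_sub_iff[OF efx(2) efy(2)] by simp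
    then show "Y \<subseteq> X" using eq_imp cp_sub_iff[OF ex(2) ey(2)] \<open>ix Ts Y = ix Ts X\<close> by simp
  next
    assume a: "Y \<subseteq> X"
    have "ix Ts Y = ix Ts X"
      using uniq[OF TL dist ey(4) ex(4), of X] ey(5) a ex by auto
    then show "f Y \<subseteq> f X"
      using eq_imp a fx(1) fy(1) cp_sub_iff[OF efx(2) efy(2)] cp_sub_iff[OF ex(2) ey(2)] by simp
  qed
qed

lemma f_inj: "inj_on f E"
proof (rule inj_onI)
  fix X Y assume "X \<in> E" "Y \<in> E" "f X = f Y"
  then show "X = Y" using f_sub[of X Y] f_sub[of Y X] by auto
qed

lemma f_Ts: assumes "i < length Ts" shows "f (Ts!i) = Ts'!i"
proof -
  have mem: "Ts!i \<in> set Ts" using assms by simp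
  have fin: "finite (Ts!i)" "card (Ts!i) \<le> d" using L_card[OF TL mem] L_sub[OF TL mem]
    by (auto intro: rev_finite_subset[OF finite_atLeastAtMost])
  have ii: "ix Ts (Ts!i) = i" using ix_eq[OF TL dist assms _ fin] by simp
  have bij: "bij_betw (h i) (cp n (Ts!i)) (cp n' (Ts'!i))" using hb assms by auto
  have "f (Ts!i) = {1..n'} - cp n' (Ts'!i)" unfolding fm_def ii using bij_betw_imp_surj_on[OF bij] by simp
  also have "\<dots> = Ts'!i" using L_sub[OF TL', of "Ts'!i"] assms len unfolding cp_def by auto
  finally show ?thesis .
qed

lemma f_set: "f ` set Ts = set Ts'"
proof -
  have st: "set Ts = nth Ts ` {..<length Ts}" by (auto simp: in_set_conv_nth)
  have "f ` set Ts = (\<lambda>i. f (Ts!i)) ` {..<length Ts}" by (subst st) (simp add: image_image)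
  also have "\<dots> = (\<lambda>i. Ts'!i) ` {..<length Ts}" using f_Ts by simp
  also have "\<dots> = set Ts'" using len by (auto simp: in_set_conv_nth)
  finally show ?thesis .
qed

lemma Down_E: "S \<in> Down n d Ts \<Longrightarrow> S \<subseteq> E"
proof
  fix X assume S: "S \<in> Down n d Ts" and X: "X \<in> S"
  have SL: "S \<in> L n d" using S unfolding Down_def by simp
  have a: "X \<subseteq> {1..n}" "card X \<le> d" using L_sub[OF SL X] L_card[OF SL X] by auto
  have "\<exists>Y\<in>set Ts. Y \<subseteq> X"
  proof (cases "S = set Ts")
    case True then show ?thesis using X by blast
  next
    case False then have "lessL d S (set Ts)" using S unfolding Down_def by simp
    then show ?thesis using X unfolding lessL_def by blast
  qed
  then obtain i where "i < length Ts" "Ts!i \<subseteq> X" by (auto simp: in_set_conv_nth)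
  then show "X \<in> E" unfolding EE_def using a by blast
qed

lemma rho_f: "S \<subseteq> E \<Longrightarrow> rho d' (f ` S) = rho d S"
  unfolding rho_def
proof -
  assume S: "S \<subseteq> E"
  have inj: "inj_on f S" using inj_on_subset[OF f_inj S] .
  show "(\<Sum>X\<in>f ` S. codim d' X) = (\<Sum>X\<in>S. codim d X)"
    unfolding sum.reindex[OF inj] comp_def
    apply (rule sum.cong[OF refl]) using S f_props(4) by blast
qed

lemma less_f:
  assumes "S \<subseteq> E" "R \<subseteq> E"
  shows "lessL d' (f ` S) (f ` R) \<longleftrightarrow> lessL d S R"
proof -
  have "(\<forall>X\<in>f ` S. \<exists>Y\<in>f ` R. Y \<subseteq> X) \<longleftrightarrow> (\<forall>X\<in>S. \<exists>Y\<in>R. f Y \<subseteq> f X)" by simp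
  also have "\<dots> \<longleftrightarrow> (\<forall>X\<in>S. \<exists>Y\<in>R. Y \<subseteq> X)"
  proof -
    have "\<forall>X\<in>S. \<forall>Y\<in>R. f Y \<subseteq> f X \<longleftrightarrow> Y \<subseteq> X" using f_sub assms by blast
    then show ?thesis by metis
  qed
  finally show ?thesis unfolding lessL_def rho_f[OF assms(1)] rho_f[OF assms(2)] by simp
qed

lemma Dd_part:
  assumes P: "P \<subseteq> E" "finite P" "P \<noteq> {}" and pi: "\<forall>X\<in>P. ix Ts X = i"
  shows "Dd d' (f ` P) = Dd d P"
proof -
  have injP: "inj_on f P" using inj_on_subset[OF f_inj P(1)] .
  obtain X0 where X0: "X0 \<in> P" using P(3) by blast
  have i1: "i < length Ts" using E_props(4)[OF TL dist, of X0] pi P(1) X0 by auto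
  have i2: "\<forall>X\<in>P. Ts!i \<subseteq> X"
  proof
    fix X assume "X \<in> P" then show "Ts!i \<subseteq> X" using E_props(5)[OF TL dist, of X] pi P(1) by auto
  qed
  note i = i1 i2
  have bij: "bij_betw (h i) (cp n (Ts!i)) (cp n' (Ts'!i))" using hb i by auto
  have Cs: "\<forall>X\<in>P. cp n X \<subseteq> cp n (Ts!i)" using i unfolding cp_def by auto
  have injh: "inj_on (h i) (\<Union>X\<in>P. cp n X)"
    apply (rule inj_on_subset[OF bij_betw_imp_inj_on[OF bij]]) using Cs by blast
  have c1: "card (h i ` cp n X) = card (cp n X)" if "X \<in> P" for X
    by (rule card_image, rule inj_on_subset[OF injh]) (use that in blast)
  have cpf: "cp n' (f X) = h i ` cp n X" if "X \<in> P" for X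
  proof -
    have "X \<in> E" using that P(1) by blast
    then show ?thesis using f_props(1)[of X] pi that by simp
  qed
  have s1: "(\<Sum>Y\<in>f ` P. card (cp n' Y)) = (\<Sum>X\<in>P. card (cp n X))"
    unfolding sum.reindex[OF injP] comp_def
    apply (rule sum.cong[OF refl]) using cpf c1 by simp
  have u1: "(\<Union>Y\<in>f ` P. cp n' Y) = h i ` (\<Union>X\<in>P. cp n X)"
    using cpf by auto
  have "ex n' (f ` P) = ex n P"
    unfolding ex_def s1 u1 card_image[OF injh] ..
  moreover have "card (f ` P) = card P" using card_image[OF injP] .
  moreover have "\<forall>X\<in>f ` P. X \<subseteq> {1..n'}" using P(1) f_props(2) E_props(2)[OF TL' dist'] by blast
  moreover have "\<forall>X\<in>P. X \<subseteq> {1..n}" using P(1) E_props(2)[OF TL dist] by blast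
  ultimately show ?thesis using Dd_ex[of "f ` P" n' d' u] Dd_ex[of P n d u] P nd nd' by simp
qed

end



lemma empty_L: "{} \<in> L n d"
  unfolding L_def by auto

lemma rho_pos: assumes "S \<in> L n d" "S \<noteq> {}" shows "rho d S > 0"
  unfolding rho_def
proof (rule sum_pos)
  show "finite S" using L_finite[OF assms(1)] .
  show "S \<noteq> {}" by fact
  fix X assume "X \<in> S" then show "codim d X > 0" using L_card[OF assms(1)] unfolding codim_def by force
qed

lemma less_empty: "S \<in> L n d \<Longrightarrow> S \<noteq> {} \<Longrightarrow> lessL d {} S"
  unfolding lessL_def using rho_pos by (simp add: rho_def)

lemma leL_empty: "R \<in> L n d \<Longrightarrow> leL d {} R"
  unfolding leL_def using less_empty by blast

lemma lessL_trans: "lessL d R S \<Longrightarrow> lessL d S T \<Longrightarrow> lessL d R T"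
  unfolding lessL_def by (meson order.strict_trans subset_trans)

lemma Down_less: "S \<in> Down n d Ts \<Longrightarrow> R \<in> L n d \<Longrightarrow> lessL d R S \<Longrightarrow> R \<in> Down n d Ts"
  unfolding Down_def using lessL_trans by blast

context pair begin

lemma TDown: "set Ts \<in> Down n d Ts" unfolding Down_def using TL by simp

lemma Down_f:
  assumes S: "S \<in> Down n d Ts"
  shows "f ` S \<in> Down n' d' Ts'"
proof -
  have SL: "S \<in> L n d" using S unfolding Down_def by simp
  have SE: "S \<subseteq> E" using Down_E[OF S] .
  have fSE: "f ` S \<subseteq> E'" using SE f_props(2) by blast
  have fSL: "f ` S \<in> L n' d'"
    unfolding L_def
  proof (intro CollectI conjI)
    show "f ` S \<subseteq> Pow {1..n'}" using fSE E_props(2)[OF TL' dist'] by blast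
    show "\<forall>X\<in>f ` S. card X \<le> d'" using fSE E_props(3)[OF TL' dist'] by blast
    show "\<forall>R'\<subseteq>f ` S. 1 < card R' \<longrightarrow> 0 < Dd d' R'"
    proof (intro allI impI)
      fix R' assume R': "R' \<subseteq> f ` S" and cR': "1 < card R'"
      from R' obtain R where RS: "R \<subseteq> S" and R'R: "R' = f ` R" unfolding subset_image_iff by blast
      have fR: "finite R" using RS L_finite[OF SL] finite_subset by blast
      have RE: "R \<subseteq> E" using RS SE by blast
      have R'E: "R' \<subseteq> E'" using R' fSE by blast
      have injR: "inj_on f R" using inj_on_subset[OF f_inj RE] .
      show "0 < Dd d' R'"
      proof (rule mixed[OF nd' dist' TL', of R' "ix Ts'"])
        show "finite R'" using R'R fR by simp
        show "2 \<le> card R'" using cR' by simp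
        show "\<forall>X\<in>R'. X \<subseteq> {1..n'} \<and> ix Ts' X < length Ts' \<and> Ts' ! ix Ts' X \<subseteq> X"
        proof
          fix X assume "X \<in> R'"
          then have "X \<in> E'" using R'E by blast
          then show "X \<subseteq> {1..n'} \<and> ix Ts' X < length Ts' \<and> Ts' ! ix Ts' X \<subseteq> X"
            using E_props[OF TL' dist'] by simp
        qed
        show "\<forall>i. 2 \<le> card {X \<in> R'. ix Ts' X = i} \<longrightarrow> 0 < Dd d' {X \<in> R'. ix Ts' X = i}"
        proof (intro allI impI)
          fix i assume c2: "2 \<le> card {X \<in> R'. ix Ts' X = i}"
          define P where "P = {X \<in> R. ix Ts X = i}"
          have ixe: "\<forall>X\<in>R. ix Ts' (f X) = ix Ts X" using RE f_props(3) by blast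
          have eq: "{X \<in> R'. ix Ts' X = i} = f ` P"
            unfolding R'R P_def using ixe by auto
          have PR: "P \<subseteq> R" unfolding P_def by auto
          have cP: "card (f ` P) = card P" using card_image[OF inj_on_subset[OF injR PR]] .
          have fP: "finite P" using fR PR finite_subset by blast
          have Pne: "P \<noteq> {}" using c2 eq by auto
          have "Dd d' (f ` P) = Dd d P"
            by (rule Dd_part) (use PR RE fP Pne P_def in auto)
          moreover have "card P > 1" using c2 eq cP by simp
          moreover have "P \<subseteq> S" using PR RS by blast
          ultimately show "0 < Dd d' {X \<in> R'. ix Ts' X = i}" using eq L_D[OF SL] by simp
        qed
      qed
    qed
  qed
  have "f ` S = set Ts' \<or> lessL d' (f ` S) (set Ts')"
  proof (cases "S = set Ts")
    case True then show ?thesis using f_set by simp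
  next
    case False
    then have "lessL d S (set Ts)" using S unfolding Down_def by simp
    then show ?thesis using less_f[OF SE Down_E[OF TDown]] f_set by simp
  qed
  then show ?thesis unfolding Down_def using fSL by simp
qed

end

lemma pair_inv:
  assumes "pair n d n' d' u Ts Ts' h"
  shows "pair n' d' n d u Ts' Ts (\<lambda>i. inv_into (cp n (Ts!i)) (h i))"
proof -
  interpret pair n d n' d' u Ts Ts' h by fact
  show ?thesis
    apply unfold_locales
    using nd nd' u1 dist dist' len TL TL' apply simp_all
    using hb bij_betw_inv_into len by metis
qed

lemma fm_inv:
  assumes "pair n d n' d' u Ts Ts' h" "X \<in> EE n d Ts"
  shows "fm n' n Ts' (\<lambda>i. inv_into (cp n (Ts!i)) (h i)) (fm n n' Ts h X) = X"
proof -
  interpret pair n d n' d' u Ts Ts' h by fact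
  note fp = f_props[OF assms(2)]
  note ep = E_props[OF TL dist assms(2)]
  define i where "i = ix Ts X"
  have bij: "bij_betw (h i) (cp n (Ts!i)) (cp n' (Ts'!i))" using hb ep i_def by auto
  have C: "cp n X \<subseteq> cp n (Ts!i)" using ep i_def unfolding cp_def by auto
  have "inv_into (cp n (Ts!i)) (h i) ` h i ` cp n X = cp n X"
    using inv_into_image_cancel[OF bij_betw_imp_inj_on[OF bij] C] .
  then show ?thesis unfolding fm_def[of n' n] fp(3) fp(1) i_def[symmetric]
    using ep(2) unfolding cp_def by auto
qed




lemma img_inv:
  assumes a: "\<forall>x\<in>R. g (f x) = x" shows "g ` f ` R = R"
proof -
  have "g ` f ` R = (\<lambda>x. g (f x)) ` R" by (simp add: image_image)
  also have "\<dots> = (\<lambda>x. x) ` R" by (rule image_cong) (simp_all add: a)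
  finally show ?thesis by simp
qed

lemma main_mob:
  assumes Pp: "pair n d n' d' u Ts Ts' h"
  shows "S \<in> Down n d Ts \<Longrightarrow> mob n d {} S = mob n' d' {} (fm n n' Ts h ` S)"
proof (induction "nat (rho d S)" arbitrary: S rule: less_induct)
  case less
  interpret P: pair n d n' d' u Ts Ts' h by fact
  define hi where "hi = (\<lambda>i. inv_into (cp n (Ts!i)) (h i))"
  have Qp: "pair n' d' n d u Ts' Ts hi" unfolding hi_def using pair_inv[OF Pp] .
  interpret Q: pair n' d' n d u Ts' Ts hi by fact
  have inv1: "Q.f (P.f X) = X" if "X \<in> P.E" for X using fm_inv[OF Pp that] hi_def by simp
  have inv2: "P.f (Q.f Y) = Y" if Y: "Y \<in> P.E'" for Y
  proof -
    have QY: "Q.f Y \<in> P.E" using Q.f_props(2)[OF Y] .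
    have "P.f (Q.f Y) \<in> P.E'" using P.f_props(2)[OF QY] .
    moreover have "Q.f (P.f (Q.f Y)) = Q.f Y" using inv1[OF QY] .
    ultimately show ?thesis using inj_onD[OF Q.f_inj] Y by blast
  qed
  have S: "S \<in> Down n d Ts" by fact
  have SL: "S \<in> L n d" using S unfolding Down_def by simp
  have fS: "P.f ` S \<in> Down n' d' Ts'" using P.Down_f[OF S] .
  have fSL: "P.f ` S \<in> L n' d'" using fS unfolding Down_def by simp
  have SE: "S \<subseteq> P.E" using P.Down_E[OF S] .
  show ?case
  proof (cases "S = {}")
    case True
    have "mob n d {} S = 1" using True by (subst mob.simps) simp
    moreover have "mob n' d' {} (P.f ` S) = 1" using True by (subst mob.simps) simp
    ultimately show ?thesis by simp
  next
    case False
    then have fne: "P.f ` S \<noteq> {}" by simp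
    define A where "A = {R \<in> L n d. leL d {} R \<and> lessL d R S}"
    define A' where "A' = {R \<in> L n' d'. leL d' {} R \<and> lessL d' R (P.f ` S)}"
    have e1: "mob n d {} S = - (\<Sum>R\<in>A. mob n d {} R)"
      apply (subst mob.simps) unfolding A_def using False empty_L SL less_empty[OF SL False] by simp
    have e2: "mob n' d' {} (P.f ` S) = - (\<Sum>R\<in>A'. mob n' d' {} R)"
      apply (subst mob.simps) unfolding A'_def using fne empty_L fSL less_empty[OF fSL fne] by simp
    have AD: "R \<in> Down n d Ts" if "R \<in> A" for R using Down_less[OF S] that A_def by blast
    have AD': "R \<in> Down n' d' Ts'" if "R \<in> A'" for R using Down_less[OF fS] that A'_def by blast
    have QfS: "Q.f ` P.f ` S = S" apply (intro img_inv) using inv1 SE by blast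
    have bij: "bij_betw (image P.f) A A'"
    proof (rule bij_betw_byWitness[where f' = "image Q.f"])
      show "\<forall>R\<in>A. Q.f ` P.f ` R = R"
      proof
        fix R assume "R \<in> A" then have "R \<subseteq> P.E" using AD P.Down_E by blast
        then show "Q.f ` P.f ` R = R" apply (intro img_inv) using inv1 by blast
      qed
      show "\<forall>R\<in>A'. P.f ` Q.f ` R = R"
      proof
        fix R assume "R \<in> A'" then have "R \<subseteq> P.E'" using AD' Q.Down_E by blast
        then show "P.f ` Q.f ` R = R" apply (intro img_inv) using inv2 by blast
      qed
      show "image P.f ` A \<subseteq> A'"
      proof
        fix R' assume "R' \<in> image P.f ` A"
        then obtain R where R: "R \<in> A" and R': "R' = P.f ` R" by blast
        have "P.f ` R \<in> Down n' d' Ts'" using P.Down_f[OF AD[OF R]] .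
        then have "P.f ` R \<in> L n' d'" unfolding Down_def by simp
        moreover have "lessL d' (P.f ` R) (P.f ` S)"
          using P.less_f[OF P.Down_E[OF AD[OF R]] SE] R A_def by simp
        ultimately show "R' \<in> A'" unfolding A'_def R' using leL_empty by blast
      qed
      show "image Q.f ` A' \<subseteq> A"
      proof
        fix R assume "R \<in> image Q.f ` A'"
        then obtain R' where R': "R' \<in> A'" and R: "R = Q.f ` R'" by blast
        have "Q.f ` R' \<in> Down n d Ts" using Q.Down_f[OF AD'[OF R']] .
        then have L1: "Q.f ` R' \<in> L n d" unfolding Down_def by simp
        have "lessL d (Q.f ` R') (Q.f ` P.f ` S)"
          using Q.less_f[OF Q.Down_E[OF AD'[OF R']] Q.Down_E[OF fS]] R' A'_def by simp
        then have "lessL d (Q.f ` R') S" by (simp only: QfS)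
        with L1 show "R \<in> A" unfolding A_def R using leL_empty by blast
      qed
    qed
    have "(\<Sum>R\<in>A'. mob n' d' {} R) = (\<Sum>R\<in>A. mob n' d' {} (P.f ` R))"
      using sum.reindex_bij_betw[OF bij, of "mob n' d' {}"] by simp
    also have "\<dots> = (\<Sum>R\<in>A. mob n d {} R)"
    proof (rule sum.cong[OF refl])
      fix R assume R: "R \<in> A"
      have "rho d R < rho d S" using R A_def unfolding lessL_def by simp
      moreover have "rho d R \<ge> 0" using rho_nonneg[of R d] R A_def L_card by blast
      ultimately have "nat (rho d R) < nat (rho d S)" by simp
      then show "mob n' d' {} (P.f ` R) = mob n d {} R" using less.hyps AD[OF R] by simp
    qed
    finally show ?thesis using e1 e2 by simp
  qed
qed

theorem corollary4p3:
  fixes u d d' :: nat and Ts Ts' :: "nat set list"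
  assumes "u \<ge> 1"
    and "distinct Ts" and "distinct Ts'"
    and "length Ts = length Ts'"
    and "set Ts \<in> L (d + u) d"
    and "set Ts' \<in> L (d' + u) d'"
    and "\<forall>i < length Ts. codim d (Ts ! i) = codim d' (Ts' ! i)"
  shows "mubar u d (set Ts) = mubar u d' (set Ts')"
proof -
  define n where "n = d + u"
  define n' where "n' = d' + u"
  have ex: "\<exists>g. bij_betw g (cp n (Ts!i)) (cp n' (Ts'!i))" if i: "i < length Ts" for i
  proof -
    have m: "Ts!i \<in> set Ts" "Ts'!i \<in> set Ts'" using i assms(4) by auto
    have "codim d (Ts!i) = int (card (cp n (Ts!i))) - (int u - 1)"
      using codim_cp[OF L_sub[OF assms(5) m(1)]] n_def by simp
    moreover have "codim d' (Ts'!i) = int (card (cp n' (Ts'!i))) - (int u - 1)"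
      using codim_cp[OF L_sub[OF assms(6) m(2)]] n'_def by simp
    ultimately have "card (cp n (Ts!i)) = card (cp n' (Ts'!i))" using assms(7) i by simp
    then show ?thesis using finite_same_card_bij[OF finite_cp finite_cp] by blast
  qed
  then have "\<forall>i. \<exists>g. i < length Ts \<longrightarrow> bij_betw g (cp n (Ts!i)) (cp n' (Ts'!i))" by blast
  then obtain h where h: "\<forall>i. i < length Ts \<longrightarrow> bij_betw (h i) (cp n (Ts!i)) (cp n' (Ts'!i))"
    by (rule choice[THEN exE])
  have Pp: "pair n d n' d' u Ts Ts' h"
  proof
    show "n = d + u" by (fact n_def)
    show "n' = d' + u" by (fact n'_def)
    show "1 \<le> u" by (fact assms(1))
    show "distinct Ts" by (fact assms(2))
    show "distinct Ts'" by (fact assms(3))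
    show "length Ts' = length Ts" using assms(4) by simp
    show "set Ts \<in> L n d" unfolding n_def by (fact assms(5))
    show "set Ts' \<in> L n' d'" unfolding n'_def by (fact assms(6))
    show "\<forall>i<length Ts. bij_betw (h i) (cp n (Ts ! i)) (cp n' (Ts' ! i))" using h by blast
  qed
  interpret P: pair n d n' d' u Ts Ts' h by fact
  have "mob n d {} (set Ts) = mob n' d' {} (P.f ` set Ts)" using main_mob[OF Pp P.TDown] .
  then have "mob n d {} (set Ts) = mob n' d' {} (set Ts')" using P.f_set by simp
  then show ?thesis unfolding mubar_def mu_def n_def n'_def by simp
qed


end
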